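(* Let $p=(p_i)_{i\in\mathbb{N}}$ be a cookie environment with $p_i\in[\frac12,1)$ for all $i$, and suppose $\delta=\sum_{i=1}^\infty(2p_i-1)<\infty$. Let $\nu(x)=\frac1x\mathbb{E}[(U_p(x)-x)^2]$. Then $\nu(x)\to2$ as $x\to\infty$, and there is a constant $C$ depending only on $p$ such that $|\nu(x)-2|\le C\log^4(x)/\sqrt x$ for all sufficiently large $x$.
   Context: For a cookie environment $p$, let $B_1,B_2,\dots$ be independent Bernoulli random variables with $\Pr[B_i=1]=p_i$ ($B_i=1$ is a "success", $B_i=0$ a "failure"). For a positive integer $x$, $U_p(x)=\inf\{k\in\mathbb{N}:\sum_{i=1}^k(1-B_i)=x\}-x$, i.e. the number of successes before the $x$-th failure. *)

theory Defs
  imports "HOL-Probability.Probability"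
begin

text \<open>Cookie environment p (0-based: p 0 is the first cookie). The sample space consists of
  sequences \<omega> :: nat \<Rightarrow> bool, \<omega> i = True meaning a success (B = 1) at step i;
  the coordinates are independent Bernoulli(p i).\<close>
definition cookie_space :: "(nat \<Rightarrow> real) \<Rightarrow> (nat \<Rightarrow> bool) measure" where
  "cookie_space p = (\<Pi>\<^sub>M i\<in>UNIV. measure_pmf (bernoulli_pmf (p i)))"

text \<open>U_p(x): number of successes before the x-th failure.\<close>
definition U_cookie :: "nat \<Rightarrow> (nat \<Rightarrow> bool) \<Rightarrow> nat" where
  "U_cookie x \<omega> = (LEAST k. card {i. i < k \<and> \<not> \<omega> i} = x) - x"

definition nu_cookie :: "(nat \<Rightarrow> real) \<Rightarrow> nat \<Rightarrow> real" where
  "nu_cookie p x = (1 / real x) *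
     (\<integral>\<omega>. (real (U_cookie x \<omega>) - real x)^2 \<partial>cookie_space p)"

end

theory Submission imports Defs begin

definition cyl :: "bool list \<Rightarrow> (nat \<Rightarrow> bool) set" where
  "cyl bs = {\<omega>. \<forall>i<length bs. \<omega> i = bs!i}"
definition ext :: "bool list \<Rightarrow> nat \<Rightarrow> bool" where
  "ext bs i = (if i < length bs then bs!i else False)"
definition qb :: "(nat \<Rightarrow> real) \<Rightarrow> nat \<Rightarrow> bool \<Rightarrow> real" where
  "qb p i b = (if b then p i else 1 - p i)"
definition wt :: "(nat \<Rightarrow> real) \<Rightarrow> bool list \<Rightarrow> real" where
  "wt p bs = (\<Prod>i<length bs. qb p i (bs!i))"

lemma cs_pps: "product_prob_space (\<lambda>i. measure_pmf (bernoulli_pmf (p i)))"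
  by (intro product_prob_spaceI prob_space_measure_pmf)

lemma cs_prob: "prob_space (cookie_space p)"
proof -
  interpret product_prob_space "\<lambda>i. measure_pmf (bernoulli_pmf (p i))" UNIV by (rule cs_pps)
  show ?thesis unfolding cookie_space_def by unfold_locales
qed

lemma space_cs[simp]: "space (cookie_space p) = UNIV"
  unfolding cookie_space_def by (auto simp: space_PiM)

lemma cyl_eq: "cyl bs = {x\<in>space (cookie_space p). \<forall>i\<in>{..<length bs}. x i \<in> {bs!i}}"
  by (auto simp: cyl_def)

lemma cyl_sets[measurable]: "cyl bs \<in> sets (cookie_space p)"
proof -
  have "{x\<in>space (cookie_space p). \<forall>i\<in>{..<length bs}. x i \<in> {bs!i}} \<in> sets (cookie_space p)"
    unfolding cookie_space_def
    by (rule sets.sets_Collect_finite_All) (auto intro: sets_Collect_single)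
  then show ?thesis using cyl_eq[of bs p] by simp
qed

lemma cyl_measure:
  assumes "\<And>i. 0 \<le> p i" "\<And>i. p i \<le> 1"
  shows "measure (cookie_space p) (cyl bs) = wt p bs"
proof -
  interpret product_prob_space "\<lambda>i. measure_pmf (bernoulli_pmf (p i))" UNIV by (rule cs_pps)
  have "emeasure (cookie_space p) (cyl bs) = (\<Prod>i\<in>{..<length bs}. emeasure (measure_pmf (bernoulli_pmf (p i))) {bs!i})"
    unfolding cyl_eq[of bs p] unfolding cookie_space_def
    by (rule emeasure_PiM_Collect) auto
  also have "\<dots> = (\<Prod>i\<in>{..<length bs}. ennreal (qb p i (bs!i)))"
    using assms by (intro prod.cong refl) (auto simp: emeasure_pmf_single qb_def pmf_bernoulli_True)
  also have "\<dots> = ennreal (wt p bs)"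
    unfolding wt_def using assms by (subst prod_ennreal) (auto simp: qb_def)
  finally show ?thesis
    using assms by (simp add: measure_def wt_def qb_def prod_nonneg)
qed

lemma finite_L[simp]: "finite {bs::bool list. length bs = n}"
  using finite_lists_length_eq[of "UNIV::bool set" n] by simp

lemma in_cyl_iff: "length bs = n \<Longrightarrow> (\<omega> \<in> cyl bs) = (bs = map \<omega> [0..<n])"
  by (auto simp: cyl_def list_eq_iff_nth_eq)

lemma ext_map: "i < n \<Longrightarrow> ext (map \<omega> [0..<n]) i = \<omega> i"
  by (simp add: ext_def)

lemma dep_decomp:
  fixes g :: "(nat \<Rightarrow> bool) \<Rightarrow> real"
  assumes dep: "\<And>\<omega> \<omega>'. (\<forall>i<n. \<omega> i = \<omega>' i) \<Longrightarrow> g \<omega> = g \<omega>'"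
  shows "g \<omega> = (\<Sum>bs\<in>{bs. length bs = n}. g (ext bs) * indicator (cyl bs) \<omega>)"
proof -
  have "(\<Sum>bs\<in>{bs. length bs = n}. g (ext bs) * indicator (cyl bs) \<omega>)
      = (\<Sum>bs\<in>{bs. length bs = n}. if bs = map \<omega> [0..<n] then g (ext bs) else 0)"
    by (intro sum.cong refl) (simp add: indicator_def in_cyl_iff)
  also have "\<dots> = g (ext (map \<omega> [0..<n]))"
    by (simp add: sum.delta')
  also have "\<dots> = g \<omega>"
    by (rule dep) (simp add: ext_map)
  finally show ?thesis by simp
qed

lemma bridge:
  fixes g :: "(nat \<Rightarrow> bool) \<Rightarrow> real"
  assumes p: "\<And>i. 0 \<le> p i" "\<And>i. p i \<le> 1"
  assumes dep: "\<And>\<omega> \<omega>'. (\<forall>i<n. \<omega> i = \<omega>' i) \<Longrightarrow> g \<omega> = g \<omega>'"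
  shows "integrable (cookie_space p) g"
    and "integral\<^sup>L (cookie_space p) g = (\<Sum>bs\<in>{bs. length bs = n}. wt p bs * g (ext bs))"
proof -
  interpret prob_space "cookie_space p" by (rule cs_prob)
  define H where "H = (\<lambda>\<omega>. \<Sum>bs\<in>{bs. length bs = n}. g (ext bs) * indicator (cyl bs) \<omega>)"
  have eq: "g = H"
    unfolding H_def by (rule ext, rule dep_decomp[OF dep]) assumption
  have iH: "integrable (cookie_space p) H"
    unfolding H_def by (intro Bochner_Integration.integrable_sum integrable_mult_right integrable_real_indicator cyl_sets) (simp add: less_top[symmetric])
  then show "integrable (cookie_space p) g" by (simp add: eq)
  have "integral\<^sup>L (cookie_space p) H = (\<Sum>bs\<in>{bs. length bs = n}. wt p bs * g (ext bs))"
    unfolding H_def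
    apply (subst Bochner_Integration.integral_sum)
     apply (intro integrable_mult_right integrable_real_indicator cyl_sets) apply (simp add: less_top[symmetric])
    apply (intro sum.cong refl)
    apply (simp add: cyl_measure[OF p])
    done
  then show "integral\<^sup>L (cookie_space p) g = (\<Sum>bs\<in>{bs. length bs = n}. wt p bs * g (ext bs))"
    by (simp add: eq)
qed

lemma dep_measurable:
  assumes dep: "\<And>\<omega> \<omega>'. (\<forall>i<n. \<omega> i = \<omega>' i) \<Longrightarrow> g \<omega> = g \<omega>'"
    and sp: "\<And>\<omega>. g \<omega> \<in> space N"
  shows "g \<in> measurable (cookie_space p) N"
proof (rule measurableI)
  show "g x \<in> space N" for x by (rule sp)
  fix A assume "A \<in> sets N"
  have "g -` A \<inter> space (cookie_space p) = (\<Union>bs\<in>{bs. length bs = n \<and> g (ext bs) \<in> A}. cyl bs)"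
  proof (rule set_eqI)
    fix \<omega>
    have e: "g \<omega> = g (ext (map \<omega> [0..<n]))" by (rule dep) (simp add: ext_map)
    show "\<omega> \<in> g -` A \<inter> space (cookie_space p) \<longleftrightarrow> \<omega> \<in> (\<Union>bs\<in>{bs. length bs = n \<and> g (ext bs) \<in> A}. cyl bs)"
    proof
      assume "\<omega> \<in> g -` A \<inter> space (cookie_space p)"
      then show "\<omega> \<in> (\<Union>bs\<in>{bs. length bs = n \<and> g (ext bs) \<in> A}. cyl bs)"
        using e by (auto intro!: bexI[of _ "map \<omega> [0..<n]"] simp: in_cyl_iff)
    next
      assume "\<omega> \<in> (\<Union>bs\<in>{bs. length bs = n \<and> g (ext bs) \<in> A}. cyl bs)"
      then obtain bs where "length bs = n" "g (ext bs) \<in> A" "\<omega> \<in> cyl bs" by blast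
      then show "\<omega> \<in> g -` A \<inter> space (cookie_space p)"
        using e by (simp add: in_cyl_iff)
    qed
  qed
  also have "\<dots> \<in> sets (cookie_space p)"
    by (intro sets.finite_UN) (auto intro: finite_subset[OF _ finite_L[of n]])
  finally show "g -` A \<inter> space (cookie_space p) \<in> sets (cookie_space p)" .
qed

lemma L_Suc: "{bs::bool list. length bs = Suc n} = (\<lambda>(bs,b). bs @ [b]) ` ({bs. length bs = n} \<times> UNIV)"
proof (rule set_eqI)
  fix xs :: "bool list"
  show "xs \<in> {bs. length bs = Suc n} \<longleftrightarrow> xs \<in> (\<lambda>(bs,b). bs @ [b]) ` ({bs. length bs = n} \<times> UNIV)"
  proof
    assume "xs \<in> {bs. length bs = Suc n}"
    then obtain ys y where "xs = ys @ [y]" "length ys = n"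
      by (metis (mono_tags, lifting) length_Suc_conv_rev mem_Collect_eq)
    then show "xs \<in> (\<lambda>(bs,b). bs @ [b]) ` ({bs. length bs = n} \<times> UNIV)" by force
  qed auto
qed

lemma inj_snoc: "inj_on (\<lambda>(bs::bool list,b::bool). bs @ [b]) A"
  by (auto simp: inj_on_def)

lemma wt_snoc: "wt p (bs @ [b]) = wt p bs * qb p (length bs) b"
  unfolding wt_def by (simp add: nth_append)

lemma ext_snoc: "i < length bs \<Longrightarrow> ext (bs @ [b]) i = ext bs i"
  by (simp add: ext_def nth_append)

lemma ext_snoc_last: "ext (bs @ [b]) (length bs) = b"
  by (simp add: ext_def)

lemma key:
  fixes G :: "(nat \<Rightarrow> bool) \<Rightarrow> bool \<Rightarrow> real"
  assumes p: "\<And>i. 0 \<le> p i" "\<And>i. p i \<le> 1"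
  assumes dep: "\<And>\<omega> \<omega>' b. (\<forall>i<n. \<omega> i = \<omega>' i) \<Longrightarrow> G \<omega> b = G \<omega>' b"
  shows "integral\<^sup>L (cookie_space p) (\<lambda>\<omega>. G \<omega> (\<omega> n))
       = integral\<^sup>L (cookie_space p) (\<lambda>\<omega>. p n * G \<omega> True + (1 - p n) * G \<omega> False)"
proof -
  have d1: "(\<lambda>\<omega>. G \<omega> (\<omega> n)) \<omega> = (\<lambda>\<omega>. G \<omega> (\<omega> n)) \<omega>'" if "\<forall>i<Suc n. \<omega> i = \<omega>' i" for \<omega> \<omega>'
  proof -
    have e: "\<omega> n = \<omega>' n" using that by auto
    have "G \<omega> (\<omega> n) = G \<omega>' (\<omega> n)" by (rule dep) (use that in auto)
    then show ?thesis by (simp add: e)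
  qed
  have d2: "(\<lambda>\<omega>. p n * G \<omega> True + (1 - p n) * G \<omega> False) \<omega> = (\<lambda>\<omega>. p n * G \<omega> True + (1 - p n) * G \<omega> False) \<omega>'"
    if "\<forall>i<n. \<omega> i = \<omega>' i" for \<omega> \<omega>'
    using dep[OF that, of True] dep[OF that, of False] by simp
  have "integral\<^sup>L (cookie_space p) (\<lambda>\<omega>. G \<omega> (\<omega> n))
      = (\<Sum>bs\<in>{bs. length bs = Suc n}. wt p bs * G (ext bs) (ext bs n))"
    by (rule bridge(2)[OF p d1]) auto
  also have "\<dots> = (\<Sum>(bs,b)\<in>{bs. length bs = n} \<times> UNIV. wt p (bs @ [b]) * G (ext (bs @ [b])) (ext (bs @ [b]) n))"
    unfolding L_Suc by (subst sum.reindex[OF inj_snoc]) (simp add: case_prod_beta)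
  also have "\<dots> = (\<Sum>bs\<in>{bs. length bs = n}. \<Sum>b\<in>UNIV. wt p (bs @ [b]) * G (ext (bs @ [b])) (ext (bs @ [b]) n))"
    by (subst sum.cartesian_product) simp
  also have "\<dots> = (\<Sum>bs\<in>{bs. length bs = n}. wt p bs * (p n * G (ext bs) True + (1 - p n) * G (ext bs) False))"
  proof (intro sum.cong refl)
    fix bs :: "bool list" assume "bs \<in> {bs. length bs = n}"
    then have l: "length bs = n" by simp
    have g: "G (ext (bs @ [b])) c = G (ext bs) c" for b c
      by (rule dep) (simp add: ext_snoc l)
    show "(\<Sum>b\<in>UNIV. wt p (bs @ [b]) * G (ext (bs @ [b])) (ext (bs @ [b]) n)) =
        wt p bs * (p n * G (ext bs) True + (1 - p n) * G (ext bs) False)"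
      using ext_snoc_last[of bs] l
      by (simp add: UNIV_bool wt_snoc g qb_def algebra_simps)
  qed
  also have "\<dots> = integral\<^sup>L (cookie_space p) (\<lambda>\<omega>. p n * G \<omega> True + (1 - p n) * G \<omega> False)"
    by (rule bridge(2)[OF p d2, symmetric])
  finally show ?thesis .
qed

fun st :: "nat \<Rightarrow> nat \<Rightarrow> (nat \<Rightarrow> bool) \<Rightarrow> nat \<times> nat" where
  "st x 0 \<omega> = (0, 0)"
| "st x (Suc n) \<omega> = (case st x n \<omega> of (s, f) \<Rightarrow>
     if f = x then (s, f) else if \<omega> n then (Suc s, f) else (s, Suc f))"

definition fl :: "nat \<Rightarrow> (nat \<Rightarrow> bool) \<Rightarrow> nat" where
  "fl k \<omega> = card {i. i < k \<and> \<not> \<omega> i}"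

lemma fl_0[simp]: "fl 0 \<omega> = 0" by (simp add: fl_def)

lemma fl_Suc: "fl (Suc k) \<omega> = fl k \<omega> + (if \<omega> k then 0 else 1)"
proof -
  have "{i. i < Suc k \<and> \<not> \<omega> i} = (if \<omega> k then {i. i < k \<and> \<not> \<omega> i} else insert k {i. i < k \<and> \<not> \<omega> i})"
    by (auto simp: less_Suc_eq)
  then show ?thesis by (simp add: fl_def)
qed

lemma fl_mono: "k \<le> m \<Longrightarrow> fl k \<omega> \<le> fl m \<omega>"
  unfolding fl_def by (intro card_mono) auto

lemma st_dep: "(\<forall>i<n. \<omega> i = \<omega>' i) \<Longrightarrow> st x n \<omega> = st x n \<omega>'"
  by (induction n) (auto split: prod.splits)

lemma st_inv:
  "snd (st x n \<omega>) \<le> x \<and> fst (st x n \<omega>) + snd (st x n \<omega>) \<le> n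
   \<and> (snd (st x n \<omega>) < x \<longrightarrow> fst (st x n \<omega>) + snd (st x n \<omega>) = n)
   \<and> fl (fst (st x n \<omega>) + snd (st x n \<omega>)) \<omega> = snd (st x n \<omega>)
   \<and> (\<forall>k < fst (st x n \<omega>) + snd (st x n \<omega>). fl k \<omega> < x)"
proof (induction n)
  case 0 then show ?case by simp
next
  case (Suc n)
  obtain s f where sf: "st x n \<omega> = (s, f)" by (cases "st x n \<omega>")
  show ?case
  proof (cases "f = x")
    case True then show ?thesis using Suc sf by simp
  next
    case False
    with Suc sf have fx: "f < x" "s + f = n" "fl n \<omega> = f" "\<forall>k<n. fl k \<omega> < x" by auto
    have a: "fl k \<omega> < x" if "k < Suc n" for k
      using fl_mono[of k n \<omega>] that fx by auto
    show ?thesis using fx a False sf by (auto simp: fl_Suc)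
  qed
qed

lemma st_stop: "snd (st x n \<omega>) = x \<Longrightarrow> st x (n + m) \<omega> = st x n \<omega>"
  by (induction m) (auto split: prod.splits)

lemma st_step_fst: "fst (st x n \<omega>) \<le> fst (st x (Suc n) \<omega>)"
  by (auto split: prod.splits)

lemma st_step_snd: "snd (st x n \<omega>) \<le> snd (st x (Suc n) \<omega>)"
  by (auto split: prod.splits)

lemma U_eq: assumes "snd (st x n \<omega>) = x" shows "U_cookie x \<omega> = fst (st x n \<omega>)"
proof -
  let ?s = "fst (st x n \<omega>)"
  have i: "fl (?s + x) \<omega> = x" "\<forall>k < ?s + x. fl k \<omega> < x"
    using st_inv[of x n \<omega>] assms by auto
  have "(LEAST k. card {i. i < k \<and> \<not> \<omega> i} = x) = ?s + x"
  proof (rule Least_equality)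
    show "card {i. i < ?s + x \<and> \<not> \<omega> i} = x" using i(1) by (simp add: fl_def)
    fix y assume "card {i. i < y \<and> \<not> \<omega> i} = x"
    then show "?s + x \<le> y" using i(2) by (metis fl_def less_irrefl not_le)
  qed
  then show ?thesis by (simp add: U_cookie_def)
qed

lemma harm:
  fixes \<phi> :: "nat \<Rightarrow> nat \<Rightarrow> real"
  assumes p: "\<And>i. 0 \<le> p i" "\<And>i. p i \<le> 1"
  assumes h: "\<And>s f. f < x \<Longrightarrow> p (s + f) * \<phi> (Suc s) f + (1 - p (s + f)) * \<phi> s (Suc f) = \<phi> s f"
  shows "integral\<^sup>L (cookie_space p) (\<lambda>\<omega>. case st x n \<omega> of (s, f) \<Rightarrow> \<phi> s f) = \<phi> 0 0"
proof (induction n)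
  case 0
  interpret prob_space "cookie_space p" by (rule cs_prob)
  show ?case using prob_space by simp
next
  case (Suc n)
  define G where "G \<omega> b = (case st x n \<omega> of (s, f) \<Rightarrow> if f = x then \<phi> s f else if b then \<phi> (Suc s) f else \<phi> s (Suc f))" for \<omega> b
  have dep: "G \<omega> b = G \<omega>' b" if "\<forall>i<n. \<omega> i = \<omega>' i" for \<omega> \<omega>' b
    unfolding G_def using st_dep[OF that] by simp
  have "integral\<^sup>L (cookie_space p) (\<lambda>\<omega>. case st x (Suc n) \<omega> of (s, f) \<Rightarrow> \<phi> s f)
      = integral\<^sup>L (cookie_space p) (\<lambda>\<omega>. G \<omega> (\<omega> n))"
    by (intro Bochner_Integration.integral_cong refl) (auto simp: G_def split: prod.splits)
  also have "\<dots> = integral\<^sup>L (cookie_space p) (\<lambda>\<omega>. p n * G \<omega> True + (1 - p n) * G \<omega> False)"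
    by (rule key[OF p dep])
  also have "\<dots> = integral\<^sup>L (cookie_space p) (\<lambda>\<omega>. case st x n \<omega> of (s, f) \<Rightarrow> \<phi> s f)"
  proof (intro Bochner_Integration.integral_cong refl)
    fix \<omega>
    obtain s f where sf: "st x n \<omega> = (s, f)" by (cases "st x n \<omega>")
    have inv: "f \<le> x" "f < x \<Longrightarrow> s + f = n" using st_inv[of x n \<omega>] sf by auto
    show "p n * G \<omega> True + (1 - p n) * G \<omega> False = (case st x n \<omega> of (s, f) \<Rightarrow> \<phi> s f)"
    proof (cases "f = x")
      case True then show ?thesis by (simp add: G_def sf algebra_simps)
    next
      case False
      then have "f < x" using inv by simp
      then show ?thesis using h[of f s] inv False by (simp add: G_def sf)
    qed
  qed
  finally show ?case using Suc by simp
qed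

definition ee :: "(nat \<Rightarrow> real) \<Rightarrow> nat \<Rightarrow> real" where "ee p i = 2 * p i - 1"
definition DD :: "(nat \<Rightarrow> real) \<Rightarrow> nat \<Rightarrow> real" where "DD p t = (\<Sum>i<t. ee p i)"
definition RR :: "(nat \<Rightarrow> real) \<Rightarrow> nat \<Rightarrow> real" where "RR p t = (\<Sum>i<t. (ee p i)^2)"

lemma DD_Suc: "DD p (Suc t) = DD p t + ee p t" by (simp add: DD_def)
lemma RR_Suc: "RR p (Suc t) = RR p t + (ee p t)^2" by (simp add: RR_def)

lemma E1:
  assumes p: "\<And>i. 0 \<le> p i" "\<And>i. p i \<le> 1"
  shows "integral\<^sup>L (cookie_space p) (\<lambda>\<omega>. case st x n \<omega> of (s, f) \<Rightarrow> real s - real f - DD p (s + f)) = 0"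
proof -
  have "integral\<^sup>L (cookie_space p) (\<lambda>\<omega>. case st x n \<omega> of (s, f) \<Rightarrow> real s - real f - DD p (s + f))
     = real 0 - real 0 - DD p (0 + 0)"
    by (rule harm[OF p, where \<phi> = "\<lambda>s f. real s - real f - DD p (s + f)"])
       (simp add: DD_Suc ee_def algebra_simps)
  then show ?thesis by (simp add: DD_def)
qed

lemma E2:
  assumes p: "\<And>i. 0 \<le> p i" "\<And>i. p i \<le> 1"
  shows "integral\<^sup>L (cookie_space p) (\<lambda>\<omega>. case st x n \<omega> of (s, f) \<Rightarrow>
      (real s - real f - DD p (s + f))^2 - (real (s + f) - RR p (s + f))) = 0"
proof -
  have "integral\<^sup>L (cookie_space p) (\<lambda>\<omega>. case st x n \<omega> of (s, f) \<Rightarrow>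
      (real s - real f - DD p (s + f))^2 - (real (s + f) - RR p (s + f)))
     = (real 0 - real 0 - DD p (0 + 0))^2 - (real (0 + 0) - RR p (0 + 0))"
  proof (rule harm[OF p, where \<phi> = "\<lambda>s f. (real s - real f - DD p (s + f))^2 - (real (s + f) - RR p (s + f))"])
    fix s f :: nat
    define m where "m = real s - real f - DD p (s + f)"
    define q where "q = p (s + f)"
    have a: "real (Suc s) - real f - DD p (Suc s + f) = m + 1 - (2*q - 1)"
      by (simp add: m_def q_def DD_Suc ee_def)
    have b: "real s - real (Suc f) - DD p (s + Suc f) = m - 1 - (2*q - 1)"
      by (simp add: m_def q_def DD_Suc ee_def)
    have c: "RR p (Suc s + f) = RR p (s + f) + (2*q-1)^2" "RR p (s + Suc f) = RR p (s + f) + (2*q-1)^2"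
      by (simp_all add: q_def RR_Suc ee_def)
    show "p (s + f) * ((real (Suc s) - real f - DD p (Suc s + f))\<^sup>2 - (real (Suc s + f) - RR p (Suc s + f))) +
         (1 - p (s + f)) * ((real s - real (Suc f) - DD p (s + Suc f))\<^sup>2 - (real (s + Suc f) - RR p (s + Suc f))) =
         (real s - real f - DD p (s + f))\<^sup>2 - (real (s + f) - RR p (s + f))"
      unfolding a b c m_def[symmetric] q_def[symmetric]
      by (simp add: power2_eq_square algebra_simps)
  qed
  then show ?thesis by (simp add: DD_def RR_def)
qed

lemma int_st:
  fixes F :: "nat \<times> nat \<Rightarrow> real"
  assumes p: "\<And>i. 0 \<le> p i" "\<And>i. p i \<le> 1"
  shows "integrable (cookie_space p) (\<lambda>\<omega>. F (st x n \<omega>))"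
  by (rule bridge(1)[OF p, of n]) (metis st_dep)

lemma ee_bounds: assumes "1/2 \<le> p i" "p i \<le> 1" shows "0 \<le> ee p i" "ee p i \<le> 1"
  using assms by (auto simp: ee_def)

lemma DD_bounds:
  assumes p: "\<And>i. 1/2 \<le> p i" "\<And>i. p i \<le> 1" and sm: "summable (ee p)"
  shows "0 \<le> DD p t" "DD p t \<le> suminf (ee p)" "0 \<le> RR p t" "RR p t \<le> DD p t"
proof -
  show "0 \<le> DD p t" unfolding DD_def by (intro sum_nonneg ee_bounds p)
  show "DD p t \<le> suminf (ee p)" unfolding DD_def
    by (rule sum_le_suminf[OF sm]) (auto intro: ee_bounds p)
  show "0 \<le> RR p t" unfolding RR_def by (intro sum_nonneg) auto
  show "RR p t \<le> DD p t" unfolding RR_def DD_def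
  proof (intro sum_mono)
    fix i
    have "0 \<le> ee p i" "ee p i \<le> 1" by (intro ee_bounds p)+
    then show "(ee p i)^2 \<le> ee p i" by (simp add: power2_eq_square mult_left_le)
  qed
qed

lemma amgm_aux:
  fixes m d c :: real
  assumes "0 \<le> d" "0 < c"
  shows "\<bar>2 * m * d\<bar> \<le> m^2 / c + d^2 * c"
proof -
  have "0 \<le> (\<bar>m\<bar> - d * c)^2" by simp
  then have "2 * \<bar>m\<bar> * d * c \<le> m^2 + d^2 * c^2"
    by (simp add: power2_eq_square algebra_simps)
  then have "2 * \<bar>m\<bar> * d \<le> (m^2 + d^2 * c^2) / c"
    using assms by (simp add: field_simps)
  also have "\<dots> = m^2 / c + d^2 * c" using assms by (simp add: field_simps power2_eq_square)
  finally show ?thesis using assms by (simp add: abs_mult)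
qed

lemma finite_bound:
  assumes p: "\<And>i. 1/2 \<le> p i" "\<And>i. p i \<le> 1" and sm: "summable (ee p)" and x: "1 \<le> x"
  defines "dl \<equiv> suminf (ee p)"
  shows "integral\<^sup>L (cookie_space p) (\<lambda>\<omega>. real (fst (st x n \<omega>) + snd (st x n \<omega>))) \<le> dl + 2 * real x"
    and "\<bar>integral\<^sup>L (cookie_space p) (\<lambda>\<omega>. (real (fst (st x n \<omega>)) - real (snd (st x n \<omega>)))^2)
          - 2 * integral\<^sup>L (cookie_space p) (\<lambda>\<omega>. real (snd (st x n \<omega>)))\<bar>
        \<le> dl + dl^2 + (dl + 2 * real x) / sqrt (real x) + dl^2 * sqrt (real x)"
proof -
  have p0: "0 \<le> p i" for i using p(1)[of i] by linarith
  note p01 = p0 p(2)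
  interpret prob_space "cookie_space p" by (rule cs_prob)
  note I = int_st[where p=p and x=x and n=n, OF p01]
  define Mz where "Mz z = real (fst z) - real (snd z) - DD p (fst z + snd z)" for z :: "nat \<times> nat"
  define Dz where "Dz z = DD p (fst z + snd z)" for z :: "nat \<times> nat"
  define Rz where "Rz z = RR p (fst z + snd z)" for z :: "nat \<times> nat"
  define fz where "fz z = real (snd z)" for z :: "nat \<times> nat"
  define tz where "tz z = real (fst z + snd z)" for z :: "nat \<times> nat"
  define Sz where "Sz z = real (fst z) - real (snd z)" for z :: "nat \<times> nat"
  have Db: "0 \<le> Dz z" "Dz z \<le> dl" "0 \<le> Rz z" "Rz z \<le> Dz z" for z
    using DD_bounds[OF p sm] by (auto simp: Dz_def Rz_def dl_def)
  have fb: "fz (st x n \<omega>) \<le> real x" for \<omega>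
    using st_inv[of x n \<omega>] by (simp add: fz_def)
  have e1: "integral\<^sup>L (cookie_space p) (\<lambda>\<omega>. Mz (st x n \<omega>)) = 0"
    using E1[where p=p and x=x and n=n, OF p01] by (simp add: Mz_def case_prod_beta)
  have e2: "integral\<^sup>L (cookie_space p) (\<lambda>\<omega>. (Mz (st x n \<omega>))^2 - (tz (st x n \<omega>) - Rz (st x n \<omega>))) = 0"
    using E2[where p=p and x=x and n=n, OF p01] by (simp add: Mz_def tz_def Rz_def case_prod_beta)
  have iD: "integral\<^sup>L (cookie_space p) (\<lambda>\<omega>. Dz (st x n \<omega>)) \<le> dl"
    by (rule integral_le_const[OF I]) (simp add: Db)
  have iD0: "0 \<le> integral\<^sup>L (cookie_space p) (\<lambda>\<omega>. Dz (st x n \<omega>))"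
    by (rule integral_ge_const[OF I]) (simp add: Db)
  have iR0: "0 \<le> integral\<^sup>L (cookie_space p) (\<lambda>\<omega>. Rz (st x n \<omega>))"
    by (rule integral_ge_const[OF I]) (simp add: Db)
  have ifx: "integral\<^sup>L (cookie_space p) (\<lambda>\<omega>. fz (st x n \<omega>)) \<le> real x"
    by (rule integral_le_const[OF I]) (simp add: fb)
  have "integral\<^sup>L (cookie_space p) (\<lambda>\<omega>. tz (st x n \<omega>))
      = integral\<^sup>L (cookie_space p) (\<lambda>\<omega>. Mz (st x n \<omega>) + Dz (st x n \<omega>) + 2 * fz (st x n \<omega>))"
    by (intro Bochner_Integration.integral_cong refl) (simp add: Mz_def Dz_def fz_def tz_def)
  also have "\<dots> = integral\<^sup>L (cookie_space p) (\<lambda>\<omega>. Mz (st x n \<omega>)) + integral\<^sup>L (cookie_space p) (\<lambda>\<omega>. Dz (st x n \<omega>))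
      + 2 * integral\<^sup>L (cookie_space p) (\<lambda>\<omega>. fz (st x n \<omega>))"
    using I[where F=Mz] I[where F=Dz] I[where F=fz]
    by (simp add: Bochner_Integration.integral_add)
  finally have it: "integral\<^sup>L (cookie_space p) (\<lambda>\<omega>. tz (st x n \<omega>))
      = integral\<^sup>L (cookie_space p) (\<lambda>\<omega>. Dz (st x n \<omega>)) + 2 * integral\<^sup>L (cookie_space p) (\<lambda>\<omega>. fz (st x n \<omega>))"
    using e1 by simp
  then have ta: "integral\<^sup>L (cookie_space p) (\<lambda>\<omega>. tz (st x n \<omega>)) \<le> dl + 2 * real x"
    using iD ifx by simp
  then show "integral\<^sup>L (cookie_space p) (\<lambda>\<omega>. real (fst (st x n \<omega>) + snd (st x n \<omega>))) \<le> dl + 2 * real x"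
    by (simp add: tz_def)
  have "integral\<^sup>L (cookie_space p) (\<lambda>\<omega>. (Mz (st x n \<omega>))^2)
      = integral\<^sup>L (cookie_space p) (\<lambda>\<omega>. tz (st x n \<omega>)) - integral\<^sup>L (cookie_space p) (\<lambda>\<omega>. Rz (st x n \<omega>))"
    using e2 I[where F="\<lambda>z. (Mz z)^2"] I[where F=tz] I[where F=Rz]
    by (simp add: Bochner_Integration.integral_diff)
  then have iM2: "integral\<^sup>L (cookie_space p) (\<lambda>\<omega>. (Mz (st x n \<omega>))^2) \<le> dl + 2 * real x"
    using ta iR0 by simp
  define W where "W z = - Rz z + Dz z + 2 * Mz z * Dz z + (Dz z)^2" for z
  have Sdec: "(Sz z)^2 - 2 * fz z = ((Mz z)^2 - (tz z - Rz z)) + Mz z + W z" for z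
    by (simp add: Sz_def fz_def Mz_def tz_def Rz_def W_def Dz_def power2_eq_square algebra_simps)
  have "integral\<^sup>L (cookie_space p) (\<lambda>\<omega>. (Sz (st x n \<omega>))^2) - 2 * integral\<^sup>L (cookie_space p) (\<lambda>\<omega>. fz (st x n \<omega>))
      = integral\<^sup>L (cookie_space p) (\<lambda>\<omega>. (Sz (st x n \<omega>))^2 - 2 * fz (st x n \<omega>))"
    using I[where F="\<lambda>z. (Sz z)^2"] I[where F=fz] by (simp add: Bochner_Integration.integral_diff)
  also have "\<dots> = integral\<^sup>L (cookie_space p) (\<lambda>\<omega>. ((Mz (st x n \<omega>))^2 - (tz (st x n \<omega>) - Rz (st x n \<omega>)))
       + Mz (st x n \<omega>) + W (st x n \<omega>))"
    by (simp only: Sdec)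
  also have "\<dots> = integral\<^sup>L (cookie_space p) (\<lambda>\<omega>. W (st x n \<omega>))"
    using I[where F="\<lambda>z. (Mz z)^2 - (tz z - Rz z)"] I[where F=Mz] I[where F=W] e1 e2
    by (simp add: Bochner_Integration.integral_add)
  finally have eqW: "integral\<^sup>L (cookie_space p) (\<lambda>\<omega>. (Sz (st x n \<omega>))^2) - 2 * integral\<^sup>L (cookie_space p) (\<lambda>\<omega>. fz (st x n \<omega>))
      = integral\<^sup>L (cookie_space p) (\<lambda>\<omega>. W (st x n \<omega>))" .
  define c where "c = sqrt (real x)"
  have c0: "0 < c" using x by (simp add: c_def)
  define K0 where "K0 = dl + dl^2 + dl^2 * c"
  have Wb: "\<bar>W z\<bar> \<le> K0 + (1/c) * (Mz z)^2" for z
  proof -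
    have a: "\<bar>2 * Mz z * Dz z\<bar> \<le> (Mz z)^2 / c + (Dz z)^2 * c" by (rule amgm_aux[OF Db(1) c0])
    have b: "(Dz z)^2 \<le> dl^2" using Db[of z] by (simp add: power_mono)
    have b2: "(Dz z)^2 * c \<le> dl^2 * c" using b c0 by (simp add: mult_right_mono)
    have d: "0 \<le> - Rz z + Dz z" "- Rz z + Dz z \<le> dl" using Db[of z] by auto
    have e: "(1/c) * (Mz z)^2 = (Mz z)^2 / c" by simp
    have f: "0 \<le> (Dz z)^2" by simp
    show ?thesis using a b b2 d e f unfolding W_def K0_def
      by (smt (verit))
  qed
  have "\<bar>integral\<^sup>L (cookie_space p) (\<lambda>\<omega>. W (st x n \<omega>))\<bar>
      \<le> integral\<^sup>L (cookie_space p) (\<lambda>\<omega>. K0 + (1/c) * (Mz (st x n \<omega>))^2)"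
  proof -
    have "integral\<^sup>L (cookie_space p) (\<lambda>\<omega>. W (st x n \<omega>)) \<le> integral\<^sup>L (cookie_space p) (\<lambda>\<omega>. K0 + (1/c) * (Mz (st x n \<omega>))^2)"
      by (rule integral_mono[OF I[where F=W] I[where F="\<lambda>z. K0 + (1/c) * (Mz z)^2"]]) (use Wb abs_le_iff in blast)
    moreover have "integral\<^sup>L (cookie_space p) (\<lambda>\<omega>. - W (st x n \<omega>)) \<le> integral\<^sup>L (cookie_space p) (\<lambda>\<omega>. K0 + (1/c) * (Mz (st x n \<omega>))^2)"
      by (rule integral_mono[OF I[where F="\<lambda>z. - W z"] I[where F="\<lambda>z. K0 + (1/c) * (Mz z)^2"]]) (use Wb abs_le_iff in blast)
    ultimately show ?thesis by (simp add: abs_le_iff)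
  qed
  also have "\<dots> = K0 + (1/c) * integral\<^sup>L (cookie_space p) (\<lambda>\<omega>. (Mz (st x n \<omega>))^2)"
    using I[where F="\<lambda>z. (Mz z)^2"] prob_space
    by (simp add: Bochner_Integration.integral_add)
  also have "\<dots> \<le> K0 + (1/c) * (dl + 2 * real x)"
    using iM2 c0 by (simp add: divide_right_mono)
  finally have fin: "\<bar>integral\<^sup>L (cookie_space p) (\<lambda>\<omega>. W (st x n \<omega>))\<bar> \<le> K0 + (1/c) * (dl + 2 * real x)" .
  show "\<bar>integral\<^sup>L (cookie_space p) (\<lambda>\<omega>. (real (fst (st x n \<omega>)) - real (snd (st x n \<omega>)))^2)
          - 2 * integral\<^sup>L (cookie_space p) (\<lambda>\<omega>. real (snd (st x n \<omega>)))\<bar>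
        \<le> dl + dl^2 + (dl + 2 * real x) / sqrt (real x) + dl^2 * sqrt (real x)"
    using fin eqW unfolding K0_def c_def Sz_def fz_def by simp
qed

lemma st_fst_mono: "mono (\<lambda>n. fst (st x n \<omega>))"
  by (rule incseq_SucI) (rule st_step_fst)

lemma good_facts:
  assumes N: "snd (st x N \<omega>) = x"
  shows "\<And>n. N \<le> n \<Longrightarrow> st x n \<omega> = st x N \<omega>"
    and "U_cookie x \<omega> = fst (st x N \<omega>)"
    and "\<And>n. fst (st x n \<omega>) \<le> U_cookie x \<omega>"
    and "(\<lambda>n. real (fst (st x n \<omega>))) \<longlonglongrightarrow> real (U_cookie x \<omega>)"
    and "(\<lambda>n. real (snd (st x n \<omega>))) \<longlonglongrightarrow> real x"
proof -
  show st: "\<And>n. N \<le> n \<Longrightarrow> st x n \<omega> = st x N \<omega>"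
  proof -
    fix n assume "N \<le> n"
    then obtain m where "n = N + m" using le_Suc_ex by blast
    then show "st x n \<omega> = st x N \<omega>" using st_stop[OF N, of m] by simp
  qed
  show U: "U_cookie x \<omega> = fst (st x N \<omega>)" by (rule U_eq[OF N])
  show "fst (st x n \<omega>) \<le> U_cookie x \<omega>" for n
  proof (cases "n \<le> N")
    case True then show ?thesis using monoD[OF st_fst_mono[of x \<omega>] True] U by simp
  next
    case False then show ?thesis using st[of n] U by simp
  qed
  have ev: "\<forall>\<^sub>F n in sequentially. st x n \<omega> = st x N \<omega>"
    unfolding eventually_sequentially using st by blast
  show "(\<lambda>n. real (fst (st x n \<omega>))) \<longlonglongrightarrow> real (U_cookie x \<omega>)"
    by (rule tendsto_eventually) (rule eventually_mono[OF ev], simp add: U)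
  show "(\<lambda>n. real (snd (st x n \<omega>))) \<longlonglongrightarrow> real x"
    by (rule tendsto_eventually) (rule eventually_mono[OF ev], simp add: N)
qed

lemma U_measurable:
  "(\<lambda>\<omega>. U_cookie x \<omega>) \<in> measurable (cookie_space p) (count_space UNIV)"
proof -
  have m: "(\<lambda>\<omega>. card {j. j < i \<and> \<not> \<omega> j} = x) \<in> measurable (cookie_space p) (count_space UNIV)" for i
  proof (rule dep_measurable[of i])
    fix \<omega> \<omega>' :: "nat \<Rightarrow> bool" assume "\<forall>j<i. \<omega> j = \<omega>' j"
    then have "{j. j < i \<and> \<not> \<omega> j} = {j. j < i \<and> \<not> \<omega>' j}" by auto
    then show "(card {j. j < i \<and> \<not> \<omega> j} = x) = (card {j. j < i \<and> \<not> \<omega>' j} = x)" by simp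
  qed simp
  have "(\<lambda>\<omega>. LEAST k. card {j. j < k \<and> \<not> \<omega> j} = x) \<in> measurable (cookie_space p) (count_space UNIV)"
    by (rule measurable_Least) (rule m)
  moreover have "(\<lambda>k::nat. k - x) \<in> measurable (count_space UNIV) (count_space UNIV)" by simp
  ultimately show ?thesis unfolding U_cookie_def by (rule measurable_compose[of _ _ "count_space UNIV"])
qed

lemma limit_bound:
  assumes p: "\<And>i. 1/2 \<le> p i" "\<And>i. p i \<le> 1" and sm: "summable (ee p)" and x: "1 \<le> x"
  shows "\<bar>integral\<^sup>L (cookie_space p) (\<lambda>\<omega>. (real (U_cookie x \<omega>) - real x)^2) - 2 * real x\<bar>
     \<le> suminf (ee p) + (suminf (ee p))^2 + (suminf (ee p) + 2 * real x) / sqrt (real x) + (suminf (ee p))^2 * sqrt (real x)"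
    (is "_ \<le> ?K")
proof -
  have p0: "0 \<le> p i" for i using p(1)[of i] by linarith
  note p01 = p0 p(2)
  interpret prob_space "cookie_space p" by (rule cs_prob)
  note I = int_st[where p=p and x=x, OF p01]
  have pU: "prob UNIV = 1" using prob_space by simp
  note FB1 = finite_bound(1)[OF p sm x]
  note FB2 = finite_bound(2)[OF p sm x]
  define B where "B = {\<omega>. \<forall>n. snd (st x n \<omega>) < x}"
  have Bn: "{\<omega>. snd (st x n \<omega>) < x} \<in> sets (cookie_space p)" for n
  proof -
    have "(\<lambda>\<omega>. snd (st x n \<omega>) < x) \<in> measurable (cookie_space p) (count_space UNIV)"
      by (rule dep_measurable[of n]) (metis st_dep, simp)
    then have "(\<lambda>\<omega>. snd (st x n \<omega>) < x) -` {True} \<inter> space (cookie_space p) \<in> sets (cookie_space p)"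
      by (rule measurable_sets) simp
    moreover have "(\<lambda>\<omega>. snd (st x n \<omega>) < x) -` {True} \<inter> space (cookie_space p) = {\<omega>. snd (st x n \<omega>) < x}"
      by auto
    ultimately show ?thesis by simp
  qed
  have Beq: "B = (\<Inter>n. {\<omega>. snd (st x n \<omega>) < x})" by (auto simp: B_def)
  have Bsets: "B \<in> sets (cookie_space p)"
    unfolding Beq by (rule sets.countable_INT) (use Bn in auto)
  have PBn: "real n * prob B \<le> suminf (ee p) + 2 * real x" for n
  proof -
    have "real n * prob B = integral\<^sup>L (cookie_space p) (\<lambda>\<omega>. real n * indicator B \<omega>)"
      using Bsets by simp
    also have "\<dots> \<le> integral\<^sup>L (cookie_space p) (\<lambda>\<omega>. real (fst (st x n \<omega>) + snd (st x n \<omega>)))"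
    proof (rule integral_mono)
      show "integrable (cookie_space p) (\<lambda>\<omega>. real n * indicator B \<omega>)"
        using Bsets by (intro integrable_mult_right integrable_real_indicator) (simp_all add: less_top[symmetric])
      show "integrable (cookie_space p) (\<lambda>\<omega>. real (fst (st x n \<omega>) + snd (st x n \<omega>)))"
        by (rule I)
      fix \<omega> show "real n * indicator B \<omega> \<le> real (fst (st x n \<omega>) + snd (st x n \<omega>))"
      proof (cases "\<omega> \<in> B")
        case True
        then have "snd (st x n \<omega>) < x" by (simp add: B_def)
        then have "fst (st x n \<omega>) + snd (st x n \<omega>) = n" using st_inv[of x n \<omega>] by blast
        then show ?thesis using True by simp
      qed simp
    qed
    also have "\<dots> \<le> suminf (ee p) + 2 * real x" by (rule FB1)
    finally show ?thesis .
  qed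
  have PB: "prob B = 0"
  proof (rule ccontr)
    assume "prob B \<noteq> 0"
    then have pos: "0 < prob B" using measure_nonneg[of "cookie_space p" B] by linarith
    obtain n :: nat where n: "(suminf (ee p) + 2 * real x) / prob B < real n"
      using reals_Archimedean2 by blast
    then have "suminf (ee p) + 2 * real x < real n * prob B" using pos by (simp add: field_simps)
    with PBn[of n] show False by simp
  qed
  have Bnull: "B \<in> null_sets (cookie_space p)"
    using Bsets PB by (simp add: null_sets_def emeasure_eq_measure)
  have AEg: "AE \<omega> in cookie_space p. \<exists>N. snd (st x N \<omega>) = x"
    using AE_not_in[OF Bnull]
  proof eventually_elim
    case (elim \<omega>)
    then obtain N where "\<not> snd (st x N \<omega>) < x" by (auto simp: B_def)
    moreover have "snd (st x N \<omega>) \<le> x" using st_inv[of x N \<omega>] by blast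
    ultimately show ?case by (intro exI[of _ N]) linarith
  qed
  have Um: "(\<lambda>\<omega>. real (U_cookie x \<omega>)) \<in> borel_measurable (cookie_space p)"
    by (rule measurable_compose[OF U_measurable]) simp
  define Sq where "Sq n \<omega> = (real (fst (st x n \<omega>)))^2" for n \<omega>
  define BB where "BB = 2 * (2 * real x + ?K) + 2 * (real x)^2"
  have Sqb: "integral\<^sup>L (cookie_space p) (Sq n) \<le> BB" for n
  proof -
    have a: "integral\<^sup>L (cookie_space p) (\<lambda>\<omega>. (real (fst (st x n \<omega>)) - real (snd (st x n \<omega>)))^2) \<le> 2 * real x + ?K"
    proof -
      have "integral\<^sup>L (cookie_space p) (\<lambda>\<omega>. real (snd (st x n \<omega>))) \<le> real x"
        by (rule integral_le_const[OF I]) (use st_inv[of x _ _] in \<open>simp\<close>)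
      then show ?thesis using FB2[of n] by (simp add: abs_le_iff)
    qed
    have "integral\<^sup>L (cookie_space p) (Sq n) \<le> integral\<^sup>L (cookie_space p) (\<lambda>\<omega>. 2 * (real (fst (st x n \<omega>)) - real (snd (st x n \<omega>)))^2 + 2 * (real x)^2)"
    proof (rule integral_mono)
      show "integrable (cookie_space p) (Sq n)" unfolding Sq_def by (rule I)
      show "integrable (cookie_space p) (\<lambda>\<omega>. 2 * (real (fst (st x n \<omega>)) - real (snd (st x n \<omega>)))^2 + 2 * (real x)^2)"
        by (rule I)
      fix \<omega>
      define a where "a = real (fst (st x n \<omega>))"
      define b where "b = real (snd (st x n \<omega>))"
      have b0: "0 \<le> b" "b \<le> real x" using st_inv[of x n \<omega>] by (auto simp: b_def)
      have "b^2 \<le> (real x)^2" using b0 by (simp add: power_mono)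
      moreover have "a^2 \<le> 2 * (a - b)^2 + 2 * b^2"
        using sum_squares_ge_zero[of "a - 2*b" 0] by (simp add: power2_eq_square algebra_simps) 
      ultimately show "Sq n \<omega> \<le> 2 * (real (fst (st x n \<omega>)) - real (snd (st x n \<omega>)))^2 + 2 * (real x)^2"
        unfolding Sq_def a_def[symmetric] b_def[symmetric] by linarith
    qed
    also have "\<dots> = 2 * integral\<^sup>L (cookie_space p) (\<lambda>\<omega>. (real (fst (st x n \<omega>)) - real (snd (st x n \<omega>)))^2) + 2 * (real x)^2"
      using I[where F="\<lambda>z. (real (fst z) - real (snd z))^2"] by (simp add: pU)
    also have "\<dots> \<le> BB" unfolding BB_def by (intro add_right_mono mult_left_mono a) simp
    finally show ?thesis .
  qed
  have Sqmono: "Sq n \<omega> \<le> Sq (Suc n) \<omega>" for n \<omega>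
    unfolding Sq_def using st_step_fst[of x n \<omega>] by (simp add: power_mono)
  have "incseq (\<lambda>n. integral\<^sup>L (cookie_space p) (Sq n))"
  proof (rule incseq_SucI, rule integral_mono)
    show "integrable (cookie_space p) (Sq n)" for n unfolding Sq_def by (rule I)
    show "integrable (cookie_space p) (Sq (Suc n))" for n unfolding Sq_def by (rule I)
    show "Sq n \<omega> \<le> Sq (Suc n) \<omega>" for n \<omega> by (rule Sqmono)
  qed
  then obtain L where L: "(\<lambda>n. integral\<^sup>L (cookie_space p) (Sq n)) \<longlonglongrightarrow> L"
    using incseq_convergent[of _ BB] Sqb by blast
  have iU2: "integrable (cookie_space p) (\<lambda>\<omega>. (real (U_cookie x \<omega>))^2)"
  proof (rule integral_monotone_convergence_nonneg(1)[where f = Sq])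
    show "integrable (cookie_space p) (Sq i)" for i unfolding Sq_def by (rule I)
    show "AE \<omega> in cookie_space p. mono (\<lambda>n. Sq n \<omega>)"
      by (intro AE_I2 incseq_SucI Sqmono)
    show "AE \<omega> in cookie_space p. 0 \<le> Sq i \<omega>" for i by (simp add: Sq_def)
    show "AE \<omega> in cookie_space p. (\<lambda>i. Sq i \<omega>) \<longlonglongrightarrow> (real (U_cookie x \<omega>))^2"
      using AEg
    proof eventually_elim
      case (elim \<omega>)
      then obtain N where "snd (st x N \<omega>) = x" by blast
      from good_facts(4)[OF this] show ?case unfolding Sq_def by (intro tendsto_intros)
    qed
    show "(\<lambda>i. integral\<^sup>L (cookie_space p) (Sq i)) \<longlonglongrightarrow> L" by (rule L)
    show "(\<lambda>\<omega>. (real (U_cookie x \<omega>))^2) \<in> borel_measurable (cookie_space p)"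
      using Um by (rule borel_measurable_power)
  qed
  have lim1: "(\<lambda>n. integral\<^sup>L (cookie_space p) (\<lambda>\<omega>. (real (fst (st x n \<omega>)) - real (snd (st x n \<omega>)))^2))
      \<longlonglongrightarrow> integral\<^sup>L (cookie_space p) (\<lambda>\<omega>. (real (U_cookie x \<omega>) - real x)^2)"
  proof (rule integral_dominated_convergence[where w = "\<lambda>\<omega>. 2 * (real (U_cookie x \<omega>))^2 + 2 * (real x)^2"])
    show "(\<lambda>\<omega>. (real (U_cookie x \<omega>) - real x)^2) \<in> borel_measurable (cookie_space p)"
      using Um by measurable
    show "(\<lambda>\<omega>. (real (fst (st x n \<omega>)) - real (snd (st x n \<omega>)))^2) \<in> borel_measurable (cookie_space p)" for n
      by (rule borel_measurable_integrable[OF I])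
    show "integrable (cookie_space p) (\<lambda>\<omega>. 2 * (real (U_cookie x \<omega>))^2 + 2 * (real x)^2)"
      using iU2 by simp
    show "AE \<omega> in cookie_space p. (\<lambda>n. (real (fst (st x n \<omega>)) - real (snd (st x n \<omega>)))^2) \<longlonglongrightarrow> (real (U_cookie x \<omega>) - real x)^2"
      using AEg
    proof eventually_elim
      case (elim \<omega>)
      then obtain N where "snd (st x N \<omega>) = x" by blast
      from good_facts(4,5)[OF this] show ?case by (intro tendsto_intros)
    qed
    show "AE \<omega> in cookie_space p. norm ((real (fst (st x n \<omega>)) - real (snd (st x n \<omega>)))^2) \<le> 2 * (real (U_cookie x \<omega>))^2 + 2 * (real x)^2" for n
      using AEg
    proof eventually_elim
      case (elim \<omega>)
      then obtain N where N: "snd (st x N \<omega>) = x" by blast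
      define a where "a = real (fst (st x n \<omega>))"
      define b where "b = real (snd (st x n \<omega>))"
      have a0: "0 \<le> a" "a \<le> real (U_cookie x \<omega>)" using good_facts(3)[OF N, of n] by (auto simp: a_def)
      have b0: "0 \<le> b" "b \<le> real x" using st_inv[of x n \<omega>] by (auto simp: b_def)
      have "a^2 \<le> (real (U_cookie x \<omega>))^2" using a0 by (simp add: power_mono)
      moreover have "b^2 \<le> (real x)^2" using b0 by (simp add: power_mono)
      moreover have "(a - b)^2 \<le> 2 * a^2 + 2 * b^2"
        using sum_squares_ge_zero[of "a + b" 0] by (simp add: power2_eq_square algebra_simps)
      ultimately show ?case unfolding a_def[symmetric] b_def[symmetric] by simp
    qed
  qed
  have lim2: "(\<lambda>n. integral\<^sup>L (cookie_space p) (\<lambda>\<omega>. real (snd (st x n \<omega>))))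
      \<longlonglongrightarrow> integral\<^sup>L (cookie_space p) (\<lambda>\<omega>. real x)"
  proof (rule integral_dominated_convergence[where w = "\<lambda>\<omega>. real x"])
    show "(\<lambda>\<omega>. real x) \<in> borel_measurable (cookie_space p)" by simp
    show "(\<lambda>\<omega>. real (snd (st x n \<omega>))) \<in> borel_measurable (cookie_space p)" for n
      by (rule borel_measurable_integrable[OF I])
    show "integrable (cookie_space p) (\<lambda>\<omega>. real x)" by simp
    show "AE \<omega> in cookie_space p. (\<lambda>n. real (snd (st x n \<omega>))) \<longlonglongrightarrow> real x"
      using AEg
    proof eventually_elim
      case (elim \<omega>)
      then obtain N where "snd (st x N \<omega>) = x" by blast
      from good_facts(5)[OF this] show ?case .
    qed
    show "AE \<omega> in cookie_space p. norm (real (snd (st x n \<omega>))) \<le> real x" for n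
      using st_inv[of x n] by simp
  qed
  have lim: "(\<lambda>n. \<bar>integral\<^sup>L (cookie_space p) (\<lambda>\<omega>. (real (fst (st x n \<omega>)) - real (snd (st x n \<omega>)))^2)
          - 2 * integral\<^sup>L (cookie_space p) (\<lambda>\<omega>. real (snd (st x n \<omega>)))\<bar>)
      \<longlonglongrightarrow> \<bar>integral\<^sup>L (cookie_space p) (\<lambda>\<omega>. (real (U_cookie x \<omega>) - real x)^2) - 2 * real x\<bar>"
    using tendsto_rabs[OF tendsto_diff[OF lim1 tendsto_mult[OF tendsto_const lim2]]]
    by (simp add: pU)
  show ?thesis
    by (rule LIMSEQ_le_const2[OF lim]) (use FB2 in auto)
qed

lemma K_bound:
  fixes dl c :: real
  assumes "0 \<le> dl" "1 \<le> c"
  shows "dl + dl^2 + (dl + 2 * c^2) / c + dl^2 * c \<le> (2 + 2 * dl + 2 * dl^2) * c"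
proof -
  have a: "dl + dl^2 \<le> (dl + dl^2) * c"
    using mult_left_mono[OF assms(2), of "dl + dl^2"] assms(1) by simp
  have b: "(dl + 2 * c^2) / c = dl / c + 2 * c" using assms by (simp add: field_simps power2_eq_square)
  have c: "dl / c \<le> dl * c"
  proof -
    have "dl / c \<le> dl" using assms by (simp add: divide_le_eq mult_le_cancel_left1)
    also have "dl \<le> dl * c" using assms by (simp add: mult_le_cancel_left1)
    finally show ?thesis .
  qed
  show ?thesis using a b c by (simp add: algebra_simps)
qed

lemma nu_bound:
  assumes p: "\<And>i. 1/2 \<le> p i" "\<And>i. p i \<le> 1" and sm: "summable (ee p)" and x: "1 \<le> x"
  shows "\<bar>nu_cookie p x - 2\<bar> \<le> (2 + 2 * suminf (ee p) + 2 * (suminf (ee p))^2) / sqrt (real x)"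
proof -
  define dl where "dl = suminf (ee p)"
  define c where "c = sqrt (real x)"
  define J where "J = integral\<^sup>L (cookie_space p) (\<lambda>\<omega>. (real (U_cookie x \<omega>) - real x)^2)"
  have dl0: "0 \<le> dl" unfolding dl_def by (rule suminf_nonneg[OF sm]) (intro ee_bounds p)
  have c1: "1 \<le> c" using x by (simp add: c_def)
  have xc: "real x = c^2" by (simp add: c_def)
  have J: "\<bar>J - 2 * real x\<bar> \<le> dl + dl^2 + (dl + 2 * c^2) / c + dl^2 * c"
    using limit_bound[OF p sm x] unfolding J_def dl_def c_def by simp
  have "nu_cookie p x - 2 = (J - 2 * real x) / real x"
    using x by (simp add: nu_cookie_def J_def field_simps)
  then have "\<bar>nu_cookie p x - 2\<bar> = \<bar>J - 2 * real x\<bar> / c^2" by (simp add: xc)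
  also have "\<dots> \<le> ((2 + 2 * dl + 2 * dl^2) * c) / c^2"
    using J K_bound[OF dl0 c1] by (intro divide_right_mono) auto
  also have "\<dots> = (2 + 2 * dl + 2 * dl^2) / c" using c1 by (simp add: power2_eq_square)
  finally show ?thesis by (simp add: dl_def c_def)
qed

theorem lemma4p2:
  fixes p :: "nat \<Rightarrow> real"
  assumes "\<And>i. 1/2 \<le> p i" and "\<And>i. p i < 1"
    and "summable (\<lambda>i. 2 * p i - 1)"
  shows "(nu_cookie p \<longlongrightarrow> 2) at_top
    \<and> (\<exists>C. \<forall>\<^sub>F x in at_top.
          \<bar>nu_cookie p x - 2\<bar> \<le> C * ln (real x) ^ 4 / sqrt (real x))"
proof -
  have p: "\<And>i. 1/2 \<le> p i" "\<And>i. p i \<le> 1" using assms(1,2) less_imp_le by auto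
  have sm: "summable (ee p)" using assms(3) by (simp add: ee_def[abs_def])
  define C0 where "C0 = 2 + 2 * suminf (ee p) + 2 * (suminf (ee p))^2"
  have C0: "0 \<le> C0"
  proof -
    have "0 \<le> suminf (ee p)" by (rule suminf_nonneg[OF sm]) (intro ee_bounds p)
    then show ?thesis by (simp add: C0_def)
  qed
  have bnd: "\<forall>\<^sub>F x in at_top. \<bar>nu_cookie p x - 2\<bar> \<le> C0 / sqrt (real x)"
    unfolding eventually_at_top_linorder C0_def using nu_bound[OF p sm] by blast
  have g0: "((\<lambda>x::nat. C0 / sqrt (real x)) \<longlongrightarrow> 0) at_top"
    by (rule tendsto_divide_0[OF tendsto_const])
       (rule filterlim_at_top_imp_at_infinity[OF filterlim_compose[OF sqrt_at_top filterlim_real_sequentially]])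
  have "((\<lambda>x. nu_cookie p x - 2) \<longlongrightarrow> 0) at_top"
    by (rule Lim_null_comparison[OF _ g0]) (use bnd in simp)
  then have t: "(nu_cookie p \<longlongrightarrow> 2) at_top" by (simp add: LIM_zero_iff)
  have "\<forall>\<^sub>F x in at_top. \<bar>nu_cookie p x - 2\<bar> \<le> C0 * ln (real x) ^ 4 / sqrt (real x)"
  proof -
    have "\<forall>\<^sub>F x in at_top. (3::nat) \<le> x" by (rule eventually_ge_at_top)
    with bnd show ?thesis
    proof eventually_elim
      case (elim x)
      have "exp 1 \<le> real x" using exp_le elim(2) by linarith
      moreover have "0 < real x" using elim(2) by simp
      ultimately have "ln (exp 1) \<le> ln (real x)" by (subst ln_le_cancel_iff) auto
      then have l1: "1 \<le> ln (real x)" by simp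
      then have "1 \<le> ln (real x) ^ 4" by (simp add: one_le_power)
      then have "C0 \<le> C0 * ln (real x) ^ 4" using C0 by (simp add: mult_le_cancel_left1)
      then have "C0 / sqrt (real x) \<le> C0 * ln (real x) ^ 4 / sqrt (real x)"
        by (intro divide_right_mono) auto
      then show ?case using elim(1) by linarith
    qed
  qed
  with t show ?thesis by blast
qed

end
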